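(* There exists a family of species trees whose number of matching coalescent histories grows faster than exponentially in the number of taxa (leaves) $m$. In particular, for odd $m\ge 1$, the number $h_{(m-1)/2}$ of matching coalescent histories of the lodgepole species tree $\lambda_{(m-1)/2}$ (which has $m$ leaves) satisfies, as $m\to\infty$ through odd values, $$h_{(m-1)/2}\sim m!!\sim\sqrt{2}\left(\sqrt{\frac{m+1}{e}}\right)^{m+1}.$$
   Context: A species tree is a rooted binary tree whose leaves carry distinct labels. Each node $v$ of a tree $t$ has a branch directly above it: for a non-root node this is the edge joining $v$ to its parent, and the root additionally has a root branch above it. A leaf $x$ descends from a branch if $x$ lies in the subtree below that branch. A branch $b'$ is descended from a branch $b$ if the node at the lower end of $b'$ lies in the subtree below $b$. Given a species tree $t$, a matching coalescent history of $t$ is a map $h$ from the set of internal nodes of $t$ to the set of branches of $t$ such that: (a) for every leaf $x$ and internal node $k$, if $x$ descends from $k$ then $x$ descends from the branch $h(k)$; (b) for all internal nodes $k_1,k_2$, if $k_2$ is a descendant of $k_1$ then $h(k_2)$ is descended from or coincides with $h(k_1)$. The lodgepole family $(\lambda_n)_{n\ge0}$: $\lambda_0$ is the one-leaf tree, and $\lambda_{n+1}$ is obtained by attaching $\lambda_n$ and a cherry (a two-leaf tree) as the two child subtrees of a new root; $\lambda_n$ has $2n+1$ leaves. The one-leaf tree $\lambda_0$ is assigned $h_0=1$ history by convention. $m!!=m(m-2)\cdots 3\cdot1$ for odd $m$, and $\sim$ denotes asymptotic equivalence (ratio tends to $1$). *)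

theory Defs
  imports "HOL-Analysis.Analysis" "HOL-Library.Landau_Symbols"
begin

text \<open>Rooted binary tree shapes. Leaves are identified by their position
(path from the root), which plays the role of distinct leaf labels.\<close>
datatype stree = Leaf | Node stree stree

text \<open>Positions of nodes: paths from the root (False = left child, True = right child).
The branch above a node is identified with that node.\<close>
fun nodes :: "stree \<Rightarrow> bool list set" where
  "nodes Leaf = {[]}"
| "nodes (Node l r) = {[]} \<union> Cons False ` nodes l \<union> Cons True ` nodes r"

fun inodes :: "stree \<Rightarrow> bool list set" where
  "inodes Leaf = {}"
| "inodes (Node l r) = {[]} \<union> Cons False ` inodes l \<union> Cons True ` inodes r"

fun leaves :: "stree \<Rightarrow> bool list set" where
  "leaves Leaf = {[]}"
| "leaves (Node l r) = Cons False ` leaves l \<union> Cons True ` leaves r"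

definition below :: "bool list \<Rightarrow> bool list \<Rightarrow> bool" where
  "below p q \<longleftrightarrow> (\<exists>zs. q = p @ zs)"

definition matching_history :: "stree \<Rightarrow> (bool list \<Rightarrow> bool list) \<Rightarrow> bool" where
  "matching_history t h \<longleftrightarrow>
     (\<forall>k \<in> inodes t. h k \<in> nodes t) \<and>
     (\<forall>x \<in> leaves t. \<forall>k \<in> inodes t. below k x \<longrightarrow> below (h k) x) \<and>
     (\<forall>k1 \<in> inodes t. \<forall>k2 \<in> inodes t. below k1 k2 \<longrightarrow> below (h k1) (h k2))"

text \<open>Number of matching coalescent histories (maps on internal nodes,
made extensional so that each map is counted once).\<close>
definition num_histories :: "stree \<Rightarrow> nat" where
  "num_histories t = card {h. h \<in> extensional (inodes t) \<and> matching_history t h}"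

fun lodgepole :: "nat \<Rightarrow> stree" where
  "lodgepole 0 = Leaf"
| "lodgepole (Suc n) = Node (lodgepole n) (Node Leaf Leaf)"

fun dfact :: "nat \<Rightarrow> nat" where
  "dfact 0 = 1"
| "dfact (Suc 0) = 1"
| "dfact (Suc (Suc n)) = Suc (Suc n) * dfact n"

end

theory Submission
  imports Defs "HOL-Real_Asymp.Real_Asymp"
begin

lemma below_Nil[simp]: "below [] k" by (simp add: below_def)
lemma below_Cons_Cons[simp]: "below (a#x) (b#y) \<longleftrightarrow> a = b \<and> below x y" by (auto simp: below_def)
lemma below_Cons_Nil[simp]: "\<not> below (a#x) []" by (simp add: below_def)

lemma finite_inodes: "finite (inodes t)" by (induction t) auto
lemma inodes_nodes: "inodes t \<subseteq> nodes t" by (induction t) auto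
lemma nodes_take: "k \<in> nodes t \<Longrightarrow> take i k \<in> nodes t"
proof (induction t arbitrary: k i)
  case Leaf then show ?case by simp
next
  case (Node l r) then show ?case by (cases i) auto
qed
lemma inodes_leaves: "k \<in> inodes t \<Longrightarrow> (\<exists>zs. k @ False # zs \<in> leaves t) \<and> (\<exists>zs. k @ True # zs \<in> leaves t)"
proof (induction t arbitrary: k)
  case Leaf then show ?case by simp
next
  case (Node l r)
  have ex: "\<exists>x. x \<in> leaves t" for t by (induction t) auto
  from Node.prems consider "k = []" | k' where "k = False # k'" "k' \<in> inodes l" | k' where "k = True # k'" "k' \<in> inodes r" by auto
  then show ?case
  proof cases
    case 1
    obtain x where x: "x \<in> leaves l" using ex by blast
    obtain y where y: "y \<in> leaves r" using ex by blast
    show ?thesis using x y 1 by auto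
  next
    case 2 then show ?thesis using Node.IH(1)[of k'] by auto
  next
    case 3 then show ?thesis using Node.IH(2)[of k'] by auto
  qed
qed

lemma prefix_common: assumes "below p (k @ False # zs)" "below p (k @ True # zs')"
  shows "below p k"
proof -
  obtain u v where u: "k @ False # zs = p @ u" and v: "k @ True # zs' = p @ v" using assms by (auto simp: below_def)
  show ?thesis
  proof (rule ccontr)
    assume "\<not> below p k"
    then have "length p > length k" using u
      by (metis append_eq_append_conv_if append_take_drop_id below_def leI take_all)
    then have "(k @ False # zs) ! length k = p ! length k" "(k @ True # zs') ! length k = p ! length k"
      using u v by (metis nth_append)+
    then show False by simp
  qed
qed

definition HS :: "stree \<Rightarrow> nat \<Rightarrow> (bool list \<Rightarrow> int) set" where
  "HS t j = {d. d \<in> extensional (inodes t) \<and> (\<forall>k\<in>inodes t. - int j \<le> d k \<and> d k \<le> int (length k))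
      \<and> (\<forall>k1\<in>inodes t. \<forall>k2\<in>inodes t. below k1 k2 \<longrightarrow> d k1 \<le> d k2)}"

lemma finite_HS: "finite (HS t j)"
proof (rule finite_subset)
  show "HS t j \<subseteq> PiE (inodes t) (\<lambda>k. {- int j..int (length k)})"
    by (auto simp: HS_def PiE_def Pi_def)
  show "finite (PiE (inodes t) (\<lambda>k. {- int j..int (length k)}))"
    by (rule finite_PiE) (auto simp: finite_inodes)
qed

lemma below_take: "below (take a k) (take b k) \<longleftrightarrow> min a (length k) \<le> min b (length k)"
proof
  assume "below (take a k) (take b k)"
  then obtain w where "take b k = take a k @ w" by (auto simp: below_def)
  then have "length (take b k) = length (take a k) + length w" by simp
  then show "min a (length k) \<le> min b (length k)" by simp
next
  assume h: "min a (length k) \<le> min b (length k)"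
  have "take b k = take (min b (length k)) k" by (simp add: min_def)
  also have "\<dots> = take (min a (length k) + (min b (length k) - min a (length k))) k" using h by simp
  also have "\<dots> = take (min a (length k)) k @ take (min b (length k) - min a (length k)) (drop (min a (length k)) k)"
    by (rule take_add)
  finally show "below (take a k) (take b k)" by (auto simp: below_def min_def split: if_splits)
qed

lemma below_trans: "below a b \<Longrightarrow> below b c \<Longrightarrow> below a c" by (auto simp: below_def)
lemma below_take_self: "below (take i k) k" unfolding below_def by (metis append_take_drop_id)
lemma below_takeE: "below p k \<Longrightarrow> p = take (length p) k" by (auto simp: below_def)
lemma take_below: "below k1 k2 \<Longrightarrow> i \<le> length k1 \<Longrightarrow> take i k1 = take i k2"
  by (auto simp: below_def)

lemma num_histories_HS: "num_histories t = card (HS t 0)"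
proof -
  let ?A = "{h. h \<in> extensional (inodes t) \<and> matching_history t h}"
  define f where "f h = (\<lambda>k. if k \<in> inodes t then int (length (h k)) else undefined)" for h :: "bool list \<Rightarrow> bool list"
  define g where "g d = (\<lambda>k. if k \<in> inodes t then take (nat (d k)) k else undefined)" for d :: "bool list \<Rightarrow> int"
  have pre: "below (h k) k" if hk: "h \<in> ?A" "k \<in> inodes t" for h k
  proof -
    obtain zs zs' where z: "k @ False # zs \<in> leaves t" "k @ True # zs' \<in> leaves t" using inodes_leaves[OF hk(2)] by blast
    have "below k (k @ False # zs)" "below k (k @ True # zs')" by (auto simp: below_def)
    then have "below (h k) (k @ False # zs)" "below (h k) (k @ True # zs')"
      using hk z unfolding matching_history_def by blast+
    then show ?thesis by (rule prefix_common)
  qed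
  have "bij_betw f ?A (HS t 0)"
  proof (rule bij_betw_byWitness[where f'=g])
    show "\<forall>a\<in>?A. g (f a) = a"
    proof
      fix h assume h: "h \<in> ?A"
      show "g (f h) = h"
      proof
        fix k show "g (f h) k = h k"
        proof (cases "k \<in> inodes t")
          case True
          then show ?thesis using pre[OF h True] below_takeE[OF pre[OF h True]] by (simp add: f_def g_def)
        next
          case False then show ?thesis using h by (auto simp: f_def g_def extensional_def)
        qed
      qed
    qed
    show "\<forall>a\<in>HS t 0. f (g a) = a"
    proof
      fix d assume d: "d \<in> HS t 0"
      show "f (g d) = d"
      proof
        fix k show "f (g d) k = d k"
        proof (cases "k \<in> inodes t")
          case True
          then have "0 \<le> d k" "d k \<le> int (length k)" using d by (auto simp: HS_def)
          then show ?thesis using True by (simp add: f_def g_def min_def, linarith)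
        next
          case False then show ?thesis using d by (auto simp: f_def g_def extensional_def HS_def)
        qed
      qed
    qed
    show "f ` ?A \<subseteq> HS t 0"
    proof
      fix d assume "d \<in> f ` ?A"
      then obtain h where h: "h \<in> ?A" and dh: "d = f h" by blast
      have len: "length (h k) \<le> length k" if "k \<in> inodes t" for k
        using pre[OF h that] unfolding below_def by (metis le_add1 length_append)
      have mono: "d k1 \<le> d k2" if k: "k1 \<in> inodes t" "k2 \<in> inodes t" "below k1 k2" for k1 k2
      proof -
        have b: "below (h k1) (h k2)" using h k unfolding matching_history_def by blast
        have e1: "h k1 = take (length (h k1)) k2"
          using below_takeE[OF pre[OF h k(1)]] take_below[OF k(3) len[OF k(1)]] by simp
        have e2: "h k2 = take (length (h k2)) k2" using below_takeE[OF pre[OF h k(2)]] .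
        have "min (length (h k1)) (length k2) \<le> min (length (h k2)) (length k2)"
          using b e1 e2 below_take by metis
        moreover have "length (h k1) \<le> length k2" using len[OF k(1)] k(3) unfolding below_def by auto
        ultimately show ?thesis using dh k len by (simp add: f_def)
      qed
      show "d \<in> HS t 0" using dh len mono by (auto simp: HS_def f_def extensional_def)
    qed
    show "g ` HS t 0 \<subseteq> ?A"
    proof
      fix h assume "h \<in> g ` HS t 0"
      then obtain d where d: "d \<in> HS t 0" and hd: "h = g d" by blast
      have "h k \<in> nodes t" if "k \<in> inodes t" for k
        using that inodes_nodes nodes_take by (simp add: hd g_def subset_iff)
      moreover have "below (h k) x" if "x \<in> leaves t" "k \<in> inodes t" "below k x" for x k
        using that below_trans[OF below_take_self] by (simp add: hd g_def)
      moreover have "below (h k1) (h k2)" if k: "k1 \<in> inodes t" "k2 \<in> inodes t" "below k1 k2" for k1 k2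
      proof -
        have r: "0 \<le> d k1" "d k1 \<le> int (length k1)" "0 \<le> d k2" "d k2 \<le> int (length k2)" "d k1 \<le> d k2"
          using d k by (auto simp: HS_def)
        have "h k1 = take (nat (d k1)) k2" using take_below[OF k(3), of "nat (d k1)"] r k by (simp add: hd g_def)
        moreover have "h k2 = take (nat (d k2)) k2" using k by (simp add: hd g_def)
        ultimately show ?thesis using r below_take by simp
      qed
      ultimately show "h \<in> ?A" by (auto simp: matching_history_def hd g_def extensional_def)
    qed
  qed
  then show ?thesis unfolding num_histories_def by (rule bij_betw_same_card)
qed



lemma HS_Leaf: "card (HS Leaf j) = 1"
proof -
  have "HS Leaf j = {\<lambda>_. undefined}" by (auto simp: HS_def extensional_def)
  then show ?thesis by simp
qed

lemma HS_Node: "card (HS (Node l r) j) = (\<Sum>q\<le>j. card (HS l (q+1)) * card (HS r (q+1)))"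
proof -
  let ?T = "Node l r"
  let ?B = "Sigma {..j} (\<lambda>q. HS l (q+1) \<times> HS r (q+1))"
  define f where "f d = (nat (- d []), restrict (\<lambda>k'. d (False#k') - 1) (inodes l), restrict (\<lambda>k'. d (True#k') - 1) (inodes r))"
    for d :: "bool list \<Rightarrow> int"
  define g where "g x = (\<lambda>k. if k = [] then - int (fst x) else if k \<in> inodes ?T then
      (case k of b#k' \<Rightarrow> if b then snd (snd x) k' + 1 else fst (snd x) k' + 1) else undefined)"
    for x :: "nat \<times> (bool list \<Rightarrow> int) \<times> (bool list \<Rightarrow> int)"
  have bij: "bij_betw f (HS ?T j) ?B"
  proof (rule bij_betw_byWitness[where f'=g])
    show "\<forall>a\<in>HS ?T j. g (f a) = a"
    proof
      fix d assume d: "d \<in> HS ?T j"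
      have d0: "d [] \<le> 0" using d by (auto simp: HS_def)
      show "g (f d) = d"
      proof
        fix k show "g (f d) k = d k"
        proof (cases "k \<in> inodes ?T")
          case True
          then consider "k = []" | k' where "k = False#k'" "k' \<in> inodes l" | k' where "k = True#k'" "k' \<in> inodes r" by auto
          then show ?thesis using d0 by cases (auto simp: f_def g_def)
        next
          case False then show ?thesis using d by (auto simp: f_def g_def HS_def extensional_def)
        qed
      qed
    qed
    show "\<forall>x\<in>?B. f (g x) = x"
    proof
      fix x assume x: "x \<in> ?B"
      obtain q dl dr where xq: "x = (q, dl, dr)" by (cases x) auto
      have dl: "dl \<in> extensional (inodes l)" and dr: "dr \<in> extensional (inodes r)" using x xq by (auto simp: HS_def)
      have "restrict (\<lambda>k'. g x (False#k') - 1) (inodes l) = dl"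
        using dl by (auto simp: g_def xq restrict_def extensional_def)
      moreover have "restrict (\<lambda>k'. g x (True#k') - 1) (inodes r) = dr"
        using dr by (auto simp: g_def xq restrict_def extensional_def)
      ultimately show "f (g x) = x" by (simp add: f_def xq g_def)
    qed
    show "f ` HS ?T j \<subseteq> ?B"
    proof
      fix y assume "y \<in> f ` HS ?T j"
      then obtain d where d: "d \<in> HS ?T j" and y: "y = f d" by blast
      have ext: "d \<in> extensional (inodes ?T)"
        and bnd: "\<And>k. k \<in> inodes ?T \<Longrightarrow> - int j \<le> d k \<and> d k \<le> int (length k)"
        and mon: "\<And>k1 k2. k1 \<in> inodes ?T \<Longrightarrow> k2 \<in> inodes ?T \<Longrightarrow> below k1 k2 \<Longrightarrow> d k1 \<le> d k2"
        using d by (auto simp: HS_def)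
      have d0: "- int j \<le> d []" "d [] \<le> 0" using bnd[of "[]"] by auto
      have ge: "d [] \<le> d k" if "k \<in> inodes ?T" for k using mon[of "[]" k] that by simp
      have sub: "restrict (\<lambda>k'. d (b#k') - 1) (inodes s) \<in> HS s (nat (- d []) + 1)"
        if s: "\<And>k. k \<in> inodes s \<Longrightarrow> b#k \<in> inodes ?T" for s b
      proof -
        have "- int (nat (- d []) + 1) \<le> d (b#k) - 1 \<and> d (b#k) - 1 \<le> int (length k)" if "k \<in> inodes s" for k
          using bnd[OF s[OF that]] ge[OF s[OF that]] d0 by simp
        moreover have "d (b#k1) - 1 \<le> d (b#k2) - 1" if "k1 \<in> inodes s" "k2 \<in> inodes s" "below k1 k2" for k1 k2
          using mon[OF s[OF that(1)] s[OF that(2)]] that(3) by simp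
        ultimately show ?thesis unfolding HS_def by (auto simp: restrict_def extensional_def)
      qed
      have "restrict (\<lambda>k'. d (False#k') - 1) (inodes l) \<in> HS l (nat (- d []) + 1)"
        by (rule sub) simp
      moreover have "restrict (\<lambda>k'. d (True#k') - 1) (inodes r) \<in> HS r (nat (- d []) + 1)"
        by (rule sub) simp
      moreover have "nat (- d []) \<le> j" using d0 by simp
      ultimately show "y \<in> ?B" by (simp add: y f_def)
    qed
    show "g ` ?B \<subseteq> HS ?T j"
    proof
      fix d assume "d \<in> g ` ?B"
      then obtain x where x: "x \<in> ?B" and dx: "d = g x" by blast
      obtain q dl dr where xq: "x = (q, dl, dr)" by (cases x) auto
      have q: "q \<le> j" and l: "dl \<in> HS l (q+1)" and r: "dr \<in> HS r (q+1)" using x xq by auto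
      have lb: "\<And>k. k \<in> inodes l \<Longrightarrow> - int (q+1) \<le> dl k \<and> dl k \<le> int (length k)"
        and lm: "\<And>k1 k2. k1 \<in> inodes l \<Longrightarrow> k2 \<in> inodes l \<Longrightarrow> below k1 k2 \<Longrightarrow> dl k1 \<le> dl k2"
        using l by (auto simp: HS_def)
      have rb: "\<And>k. k \<in> inodes r \<Longrightarrow> - int (q+1) \<le> dr k \<and> dr k \<le> int (length k)"
        and rm: "\<And>k1 k2. k1 \<in> inodes r \<Longrightarrow> k2 \<in> inodes r \<Longrightarrow> below k1 k2 \<Longrightarrow> dr k1 \<le> dr k2"
        using r by (auto simp: HS_def)
      have ext: "d \<in> extensional (inodes ?T)" by (auto simp: dx g_def extensional_def)
      have bnd: "- int j \<le> d k \<and> d k \<le> int (length k)" if "k \<in> inodes ?T" for k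
      proof -
        from that consider "k = []" | k' where "k = False#k'" "k' \<in> inodes l" | k' where "k = True#k'" "k' \<in> inodes r" by auto
        then show ?thesis
        proof cases
          case 1 then show ?thesis using q by (simp add: dx g_def xq)
        next
          case 2 then show ?thesis using lb[of k'] q by (simp add: dx g_def xq)
        next
          case 3 then show ?thesis using rb[of k'] q by (simp add: dx g_def xq)
        qed
      qed
      have mon: "d k1 \<le> d k2" if k: "k1 \<in> inodes ?T" "k2 \<in> inodes ?T" "below k1 k2" for k1 k2
      proof -
        from k(2) consider "k2 = []" | k' where "k2 = False#k'" "k' \<in> inodes l" | k' where "k2 = True#k'" "k' \<in> inodes r" by auto
        then show ?thesis
        proof cases
          case 1 then have "k1 = []" using k(3) by (cases k1) auto
          then show ?thesis using 1 by simp
        next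
          case 2
          from k(1) consider "k1 = []" | a where "k1 = False#a" "a \<in> inodes l" | a where "k1 = True#a" "a \<in> inodes r" by auto
          then show ?thesis
          proof cases
            case 1 then show ?thesis using 2 lb[of k'] by (simp add: dx g_def xq)
          next
            case 3 then show ?thesis using 2 k(3) by simp
          next
            case (2 a) then show ?thesis using \<open>k2 = False#k'\<close> \<open>k' \<in> inodes l\<close> k(3) lm[of a k'] by (simp add: dx g_def xq)
          qed
        next
          case 3
          from k(1) consider "k1 = []" | a where "k1 = False#a" "a \<in> inodes l" | a where "k1 = True#a" "a \<in> inodes r" by auto
          then show ?thesis
          proof cases
            case 1 then show ?thesis using 3 rb[of k'] by (simp add: dx g_def xq)
          next
            case 2 then show ?thesis using 3 k(3) by simp
          next
            case (3 a) then show ?thesis using \<open>k2 = True#k'\<close> \<open>k' \<in> inodes r\<close> k(3) rm[of a k'] by (simp add: dx g_def xq)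
          qed
        qed
      qed
      show "d \<in> HS ?T j" unfolding HS_def using ext bnd mon by blast
    qed
  qed
  have "card (HS ?T j) = card ?B" using bij by (rule bij_betw_same_card)
  also have "\<dots> = (\<Sum>q\<le>j. card (HS l (q+1) \<times> HS r (q+1)))"
    by (rule card_SigmaI) (auto intro: finite_HS)
  also have "\<dots> = (\<Sum>q\<le>j. card (HS l (q+1)) * card (HS r (q+1)))" by (simp add: card_cartesian_product)
  finally show ?thesis .
qed

fun G :: "nat \<Rightarrow> nat \<Rightarrow> nat" where
  "G 0 j = 1"
| "G (Suc n) j = (\<Sum>q\<le>j. (q+2) * G n (q+1))"

lemma HS_lodgepole: "card (HS (lodgepole n) j) = G n j"
proof (induction n arbitrary: j)
  case 0 then show ?case by (simp add: HS_Leaf)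
next
  case (Suc n)
  have c: "card (HS (Node Leaf Leaf) q) = q + 1" for q by (simp add: HS_Node HS_Leaf)
  have "card (HS (lodgepole (Suc n)) j) = (\<Sum>q\<le>j. card (HS (lodgepole n) (q+1)) * card (HS (Node Leaf Leaf) (q+1)))"
    by (simp add: HS_Node)
  also have "\<dots> = G (Suc n) j" by (simp only: c Suc.IH G.simps) (simp add: mult.commute)
  finally show ?case .
qed

lemma num_histories_G: "num_histories (lodgepole n) = G n 0"
  by (simp add: num_histories_HS HS_lodgepole)



declare binomial_Suc_Suc[simp del]

fun W :: "nat \<Rightarrow> nat" where
  "W 0 = 1"
| "W (Suc k) = (2*k+1) * W k"

lemma binom_step: "(2*n+1) * ((2*n+j+4) choose (2*n+2)) = (2*n+1) * ((2*n+j+3) choose (2*n+2)) + (j+3) * ((2*n+j+3) choose (2*n))"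
proof -
  have a: "(2*n+j+4) choose (2*n+2) = ((2*n+j+3) choose (2*n+2)) + ((2*n+j+3) choose (2*n+1))"
    using choose_reduce_nat[of "2*n+j+4" "2*n+2"] by (simp add: ac_simps)
  have b: "(2*n+1) * ((2*n+j+3) choose (2*n+1)) = (j+3) * ((2*n+j+3) choose (2*n))"
    using binomial_absorb_comp[of "2*n+j+3" "2*n"] binomial_absorption[of "2*n" "2*n+j+3"] by simp
  show ?thesis using a b by (simp add: algebra_simps)
qed

lemma binom_sum: "(2*n+1) + (\<Sum>q\<le>j. (q+2) * ((2*n+q+2) choose (2*n))) = (2*n+1) * ((2*n+j+3) choose (2*n+2))"
proof (induction j)
  case 0
  have "(2*n+2) choose (2*n) = (2*n+2) choose 2" using binomial_symmetric[of "2*n" "2*n+2"] by simp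
  also have "\<dots> = (n+1)*(2*n+1)" by (simp add: choose_two)
  finally have e: "(2*n+2) choose (2*n) = (n+1)*(2*n+1)" .
  have e2: "(2*n+3) choose (2*n+2) = 2*n+3" using binomial_symmetric[of "2*n+2" "2*n+3"] by simp
  have s: "(\<Sum>q\<le>(0::nat). (q+2) * ((2*n+q+2) choose (2*n))) = 2 * ((2*n+2) choose (2*n))" by simp
  show ?case unfolding s add_0_right e e2 by (simp add: algebra_simps)
next
  case (Suc j)
  have e: "2*n+Suc j+2 = 2*n+j+3" "2*n + Suc j + 3 = 2*n+j+4" "Suc j + 2 = j+3" by simp_all
  have "(2*n+1) + (\<Sum>q\<le>Suc j. (q+2) * ((2*n+q+2) choose (2*n)))
       = ((2*n+1) + (\<Sum>q\<le>j. (q+2) * ((2*n+q+2) choose (2*n)))) + (Suc j + 2) * ((2*n+Suc j+2) choose (2*n))"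
    by (simp only: sum.atMost_Suc add.assoc)
  also have "\<dots> = (2*n+1) * ((2*n+j+3) choose (2*n+2)) + (j+3) * ((2*n+j+3) choose (2*n))"
    by (simp only: Suc.IH e)
  also have "\<dots> = (2*n+1) * ((2*n+j+4) choose (2*n+2))" by (simp only: binom_step)
  finally show ?case by (simp only: e)
qed

lemma G_identity: "(\<Sum>k\<le>n. W k * G (n-k) j) = W n * ((2*n+j+1) choose (2*n))"
proof (induction n arbitrary: j)
  case 0 then show ?case by simp
next
  case (Suc n)
  have S1: "(\<Sum>k\<le>Suc n. W k * G (Suc n-k) j) = (\<Sum>k\<le>n. W k * G (Suc (n-k)) j) + W (Suc n)"
    by (simp add: Suc_diff_le)
  have "(\<Sum>k\<le>n. W k * G (Suc (n-k)) j) = (\<Sum>k\<le>n. \<Sum>q\<le>j. (q+2) * (W k * G (n-k) (q+1)))"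
    by (simp add: sum_distrib_left ac_simps)
  also have "\<dots> = (\<Sum>q\<le>j. (q+2) * (\<Sum>k\<le>n. W k * G (n-k) (q+1)))"
    by (subst sum.swap) (simp add: sum_distrib_left)
  also have "\<dots> = (\<Sum>q\<le>j. (q+2) * (W n * ((2*n+(q+1)+1) choose (2*n))))"
    using Suc.IH by simp
  also have "\<dots> = W n * (\<Sum>q\<le>j. (q+2) * ((2*n+q+2) choose (2*n)))"
    by (simp add: sum_distrib_left ac_simps)
  finally have A: "(\<Sum>k\<le>n. W k * G (Suc (n-k)) j) = W n * (\<Sum>q\<le>j. (q+2) * ((2*n+q+2) choose (2*n)))" .
  have "W n * (\<Sum>q\<le>j. (q+2) * ((2*n+q+2) choose (2*n))) + W (Suc n) = W n * ((2*n+1) + (\<Sum>q\<le>j. (q+2) * ((2*n+q+2) choose (2*n))))"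
    by (simp only: W.simps distrib_left mult.commute add.commute)
  also have "\<dots> = W n * ((2*n+1) * ((2*n+j+3) choose (2*n+2)))" by (simp only: binom_sum)
  also have "\<dots> = W (Suc n) * ((2*n+j+3) choose (2*n+2))" by (simp only: W.simps mult.assoc mult.commute)
  also have "(2*n+j+3) = 2 * Suc n + j + 1" by simp
  also have "2*n+2 = 2 * Suc n" by simp
  finally have B: "W n * (\<Sum>q\<le>j. (q+2) * ((2*n+q+2) choose (2*n))) + W (Suc n) = W (Suc n) * ((2 * Suc n + j + 1) choose (2 * Suc n))" .
  show ?case using S1 A B by (simp only:)
qed



definition h :: "nat \<Rightarrow> nat" where "h n = G n 0"

lemma W_pos: "W n > 0" by (induction n) auto

lemma h_identity: "(\<Sum>k\<le>n. W k * h (n-k)) = W (Suc n)"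
proof -
  have "(2*n+1) choose (2*n) = 2*n+1" using binomial_symmetric[of "2*n" "2*n+1"] by simp
  then show ?thesis using G_identity[of n 0] by (simp add: h_def)
qed

lemma h_split: "h n + (\<Sum>k\<in>{1..n}. W k * h (n-k)) = W (Suc n)"
proof -
  have "{..n} = insert 0 {1..n}" by auto
  then have "(\<Sum>k\<le>n. W k * h (n-k)) = W 0 * h n + (\<Sum>k\<in>{1..n}. W k * h (n-k))"
    by simp
  then show ?thesis using h_identity by simp
qed

lemma h_le: "h n \<le> W (Suc n)" using h_split[of n] by linarith

definition S :: "nat \<Rightarrow> nat" where "S n = (\<Sum>k\<in>{1..n}. W k * W (Suc n - k))"

lemma h_ge: "W (Suc n) \<le> h n + S n"
proof -
  have "(\<Sum>k\<in>{1..n}. W k * h (n-k)) \<le> S n" unfolding S_def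
  proof (rule sum_mono)
    fix k assume "k \<in> {1..n}"
    then have "Suc n - k = Suc (n-k)" by auto
    then show "W k * h (n-k) \<le> W k * W (Suc n - k)" using h_le[of "n-k"] by simp
  qed
  then show ?thesis using h_split[of n] by linarith
qed

lemma W_mul: "W (a+2) * W (b+2) \<le> 3 * W (a+b+2)"
proof (induction b)
  case 0 then show ?case by (simp add: numeral_eq_Suc)
next
  case (Suc b)
  have e1: "Suc b + 2 = Suc (b+2)" "a + Suc b + 2 = Suc (a+b+2)" by simp_all
  have "W (a+2) * W (Suc b+2) = (2*b+5) * (W (a+2) * W (b+2))" unfolding e1 W.simps(2) by (simp del: W.simps add: algebra_simps)
  also have "\<dots> \<le> (2*b+5) * (3 * W (a+b+2))" using Suc.IH by simp
  also have "\<dots> \<le> (2*(a+b+2)+1) * (3 * W (a+b+2))" by (intro mult_right_mono) auto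
  also have "\<dots> = 3 * W (a + Suc b + 2)" unfolding e1 W.simps(2) by (simp del: W.simps add: algebra_simps)
  finally show ?case .
qed

lemma S_bound: "(2*n+1) * S n \<le> 5 * W (Suc n)"
proof (cases "n \<ge> 2")
  case False
  then consider "n = 0" | "n = 1" by linarith
  then show ?thesis by cases (auto simp: S_def numeral_eq_Suc)
next
  case True
  then obtain m where n: "n = m + 2" by (metis add.commute le_Suc_ex)
  have set: "{1..n} = insert 1 (insert n {2..m+1})" using n by auto
  have mid: "(\<Sum>k\<in>{2..m+1}. W k * W (Suc n - k)) \<le> (\<Sum>k\<in>{2..m+1}. 3 * W (m+1))"
  proof (rule sum_mono)
    fix k assume k: "k \<in> {2..m+1}"
    define a where "a = k - 2"
    define b where "b = m + 1 - k"
    have ab: "k = a+2" "Suc n - k = b+2" "a+b+2 = m+1" using n k by (auto simp: a_def b_def)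
    show "W k * W (Suc n - k) \<le> 3 * W (m+1)" using W_mul[of a b] ab by (simp del: W.simps)
  qed
  have "S n = W 1 * W n + (W n * W 1 + (\<Sum>k\<in>{2..m+1}. W k * W (Suc n - k)))"
    unfolding S_def set using n by simp
  also have "\<dots> \<le> 2 * W n + m * (3 * W (m+1))" using mid by simp
  finally have "S n \<le> 2 * W n + m * (3 * W (m+1))" .
  then have "(2*n+1) * S n \<le> (2*n+1) * (2 * W n + m * (3 * W (m+1)))" by (rule mult_left_mono) simp
  also have "\<dots> = (2*m+5) * ((4*m+6) + 3*m) * W (m+1)" using n by (simp add: numeral_eq_Suc algebra_simps)
  also have "\<dots> \<le> (2*m+5) * (5*(2*m+3)) * W (m+1)" by (intro mult_right_mono mult_left_mono) auto
  also have "\<dots> = 5 * W (Suc n)" using n by (simp add: numeral_eq_Suc algebra_simps)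
  finally show ?thesis .
qed



declare W.simps(2)[simp del]

lemma h_W_ratio: "(\<lambda>n. real (h n) / real (W (Suc n))) \<longlonglongrightarrow> 1"
proof (rule tendsto_sandwich)
  show "\<forall>\<^sub>F n in sequentially. 1 - 5 / (2 * real n + 1) \<le> real (h n) / real (W (Suc n))"
  proof (rule always_eventually, rule allI)
    fix n
    have Wp: "real (W (Suc n)) > 0" using W_pos[of "Suc n"] by simp
    have a: "real (W (Suc n)) \<le> real (h n) + real (S n)" using h_ge[of n] by linarith
    have b: "(2 * real n + 1) * real (S n) \<le> 5 * real (W (Suc n))"
    proof -
      have "real ((2*n+1) * S n) \<le> real (5 * W (Suc n))" using S_bound[of n] by (simp only: of_nat_le_iff)
      then show ?thesis by (simp add: algebra_simps)
    qed
    have c: "real (S n) / real (W (Suc n)) \<le> 5 / (2 * real n + 1)"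
      using b Wp by (simp add: field_simps)
    have "1 - 5 / (2 * real n + 1) \<le> 1 - real (S n) / real (W (Suc n))" using c by simp
    also have "\<dots> = (real (W (Suc n)) - real (S n)) / real (W (Suc n))" using Wp by (simp add: field_simps)
    also have "\<dots> \<le> real (h n) / real (W (Suc n))" using a Wp by (intro divide_right_mono) auto
    finally show "1 - 5 / (2 * real n + 1) \<le> real (h n) / real (W (Suc n))" .
  qed
  show "\<forall>\<^sub>F n in sequentially. real (h n) / real (W (Suc n)) \<le> 1"
  proof (rule always_eventually, rule allI)
    fix n
    have "real (h n) \<le> real (W (Suc n))" using h_le[of n] by (simp only: of_nat_le_iff)
    moreover have "real (W (Suc n)) > 0" using W_pos[of "Suc n"] by simp
    ultimately show "real (h n) / real (W (Suc n)) \<le> 1" by simp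
  qed
  show "(\<lambda>n. 1 - 5 / (2 * real n + 1)) \<longlonglongrightarrow> 1" by real_asymp
  show "(\<lambda>n. 1::real) \<longlonglongrightarrow> 1" by simp
qed

lemma h_W_equiv: "(\<lambda>n. real (h n)) \<sim>[sequentially] (\<lambda>n. real (W (Suc n)))"
  by (rule asymp_equivI') (rule h_W_ratio)

lemma dfact_W: "dfact (2*n+1) = W (Suc n)"
proof (induction n)
  case 0 then show ?case by (simp add: W.simps)
next
  case (Suc n)
  have "2 * Suc n + 1 = Suc (Suc (2*n+1))" by simp
  then have "dfact (2 * Suc n + 1) = (2*n+3) * dfact (2*n+1)" by (simp add: algebra_simps)
  then show ?case using Suc.IH by (simp add: W.simps algebra_simps)
qed

lemma fact_le_W: "fact n \<le> W (Suc n)"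
proof (induction n)
  case 0 then show ?case by (simp add: W.simps)
next
  case (Suc n)
  have "fact (Suc n) = Suc n * fact n" by simp
  also have "\<dots> \<le> (2 * Suc n + 1) * W (Suc n)" using Suc.IH by (intro mult_mono) auto
  also have "\<dots> = W (Suc (Suc n))" by (simp add: W.simps)
  finally show ?case .
qed

lemma c_small_W: "(\<lambda>n. c ^ (2*n+1)) \<in> o(\<lambda>n. real (W (Suc n)))"
proof (rule smalloI_tendsto)
  show "\<forall>\<^sub>F n in sequentially. real (W (Suc n)) \<noteq> 0" using W_pos by (simp add: less_imp_neq)
  have z: "(\<lambda>n. (c^2)^n / fact n) \<longlonglongrightarrow> 0"
  proof -
    have "summable (\<lambda>n. inverse (fact n) * (c^2)^n)" by (rule summable_exp)
    then have "(\<lambda>n. inverse (fact n) * (c^2)^n) \<longlonglongrightarrow> 0" by (rule summable_LIMSEQ_zero)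
    then show ?thesis by (simp add: field_simps)
  qed
  then have z2: "(\<lambda>n. \<bar>c\<bar> * ((c^2)^n / fact n)) \<longlonglongrightarrow> 0"
    using tendsto_mult_right_zero by blast
  show "(\<lambda>n. c ^ (2*n+1) / real (W (Suc n))) \<longlonglongrightarrow> 0"
  proof (rule Lim_null_comparison[OF _ z2], rule always_eventually, rule allI)
    fix n
    have f: "(fact n :: real) \<le> real (W (Suc n))" using fact_le_W[of n] by (metis of_nat_fact of_nat_le_iff)
    have fp: "(fact n :: real) > 0" by simp
    have "norm (c ^ (2*n+1) / real (W (Suc n))) = \<bar>c\<bar> * (c^2)^n / real (W (Suc n))"
      by (simp add: abs_mult power_abs power_mult power_add)
    also have "\<dots> \<le> \<bar>c\<bar> * (c^2)^n / fact n"
      by (rule divide_left_mono) (use f fp W_pos[of "Suc n"] in auto)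
    finally show "norm (c ^ (2*n+1) / real (W (Suc n))) \<le> \<bar>c\<bar> * ((c^2)^n / fact n)" by simp
  qed
qed



definition ss :: "nat \<Rightarrow> real" where
  "ss n = fact n * exp (real n) / (real n ^ n * sqrt (real n))"

definition L :: "nat \<Rightarrow> real" where "L n = ln (ss n)"

lemma ss_pos: "n \<ge> 1 \<Longrightarrow> ss n > 0" by (simp add: ss_def)

lemma L_eq: assumes "n \<ge> 1" shows "L n = ln (fact n) + real n - real n * ln (real n) - ln (real n) / 2"
proof -
  have p: "real n > 0" using assms by simp
  have "L n = ln (fact n * exp (real n)) - ln (real n ^ n * sqrt (real n))"
    unfolding L_def ss_def using p by (simp add: ln_div)
  also have "ln (fact n * exp (real n)) = ln (fact n) + real n" by (simp add: ln_mult)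
  also have "ln (real n ^ n * sqrt (real n)) = real n * ln (real n) + ln (real n) / 2"
    using p by (simp add: ln_mult ln_realpow ln_sqrt)
  finally show ?thesis by simp
qed

lemma L_diff: assumes "n \<ge> 1" shows "L n - L (Suc n) = (real n + 1/2) * (ln (real n + 1) - ln (real n)) - 1"
proof -
  have lf: "ln (fact (Suc n) :: real) = ln (real n + 1) + ln (fact n)"
    by (simp add: ln_mult add.commute)
  show ?thesis using L_eq[OF assms] L_eq[of "Suc n"] lf by (simp add: algebra_simps)
qed

lemma d_bound: "\<exists>N. \<forall>n\<ge>N. \<bar>L n - L (Suc n)\<bar> \<le> 1 / real n ^ 2"
proof -
  have lim: "((\<lambda>x::real. x^2 * ((x+1/2)*(ln(x+1) - ln x) - 1)) \<longlongrightarrow> 1/12) at_top"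
    by real_asymp
  have lim2: "((\<lambda>n. real n^2 * ((real n+1/2)*(ln(real n+1) - ln (real n)) - 1)) \<longlongrightarrow> 1/12) sequentially"
    by (rule filterlim_compose[OF lim filterlim_real_sequentially])
  have e1: "\<forall>\<^sub>F n in sequentially. real n^2 * ((real n+1/2)*(ln(real n+1) - ln (real n)) - 1) < 1"
    using order_tendstoD(2)[OF lim2] by simp
  have e2: "\<forall>\<^sub>F n in sequentially. -1 < real n^2 * ((real n+1/2)*(ln(real n+1) - ln (real n)) - 1)"
    using order_tendstoD(1)[OF lim2] by simp
  have "\<forall>\<^sub>F n in sequentially. \<bar>L n - L (Suc n)\<bar> \<le> 1 / real n ^ 2"
    using e1 e2 eventually_ge_at_top[of "1::nat"]
  proof eventually_elim
    case (elim n)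
    have np: "real n ^ 2 > 0" using elim(3) by simp
    have "\<bar>real n^2 * (L n - L (Suc n))\<bar> \<le> 1" using elim L_diff[OF elim(3)] by simp
    then have "real n^2 * \<bar>L n - L (Suc n)\<bar> \<le> 1" by (simp add: abs_mult)
    then show ?case using np by (simp add: field_simps)
  qed
  then show ?thesis by (simp add: eventually_sequentially)
qed

lemma L_2m: "(\<lambda>m. L (2*m) - L m) \<longlonglongrightarrow> 0"
proof -
  obtain N where N: "\<And>n. n \<ge> N \<Longrightarrow> \<bar>L n - L (Suc n)\<bar> \<le> 1 / real n ^ 2" using d_bound by blast
  have "\<forall>\<^sub>F m in sequentially. norm (L (2*m) - L m) \<le> 1 / real m"
    using eventually_ge_at_top[of "max N 1"]
  proof eventually_elim
    case (elim m)
    have m1: "m \<ge> 1" "m \<ge> N" using elim by auto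
    have "L (2*m) - L m = (\<Sum>i = m..<2*m. L (Suc i) - L i)" by (rule sum_Suc_diff'[symmetric]) simp
    then have "\<bar>L (2*m) - L m\<bar> \<le> (\<Sum>i = m..<2*m. \<bar>L (Suc i) - L i\<bar>)" by (simp add: sum_abs)
    also have "\<dots> \<le> (\<Sum>i = m..<2*m. 1 / real m ^ 2)"
    proof (rule sum_mono)
      fix i assume i: "i \<in> {m..<2*m}"
      then have "\<bar>L (Suc i) - L i\<bar> \<le> 1 / real i ^ 2" using N[of i] m1 by (simp add: abs_minus_commute)
      also have "\<dots> \<le> 1 / real m ^ 2" using i m1
        by (intro divide_left_mono power_mono mult_pos_pos) auto
      finally show "\<bar>L (Suc i) - L i\<bar> \<le> 1 / real m ^ 2" .
    qed
    also have "\<dots> = 1 / real m" using m1 by (simp add: power2_eq_square)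
    finally show ?case by simp
  qed
  moreover have "(\<lambda>m. 1 / real m) \<longlonglongrightarrow> 0" by real_asymp
  ultimately show ?thesis by (rule Lim_null_comparison)
qed

lemma ss_ratio_lim: "(\<lambda>m. ss (2*m) / ss m) \<longlonglongrightarrow> 1"
proof -
  have "(\<lambda>m. exp (L (2*m) - L m)) \<longlonglongrightarrow> exp 0" by (intro tendsto_exp L_2m)
  then have a: "(\<lambda>m. exp (L (2*m) - L m)) \<longlonglongrightarrow> 1" by simp
  have "\<forall>\<^sub>F m in sequentially. exp (L (2*m) - L m) = ss (2*m) / ss m"
    using eventually_ge_at_top[of "1::nat"]
  proof eventually_elim
    case (elim m)
    have "ss (2*m) > 0" "ss m > 0" using elim by (auto intro: ss_pos)
    then show ?case by (simp add: L_def exp_diff)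
  qed
  then show ?thesis using a by (rule Lim_transform_eventually[rotated])
qed


lemma fact_2m: "(fact (2*m) :: real) = real (W m) * 2^m * fact m"
proof (induction m)
  case 0 then show ?case by (simp add: W.simps)
next
  case (Suc m)
  have e: "2 * Suc m = Suc (Suc (2*m))" by simp
  have "(fact (2 * Suc m) :: real) = real (Suc (Suc (2*m))) * (real (Suc (2*m)) * fact (2*m))"
    by (simp only: e fact_Suc)
  also have "\<dots> = real (Suc (Suc (2*m))) * (real (Suc (2*m)) * (real (W m) * 2^m * fact m))"
    by (simp only: Suc.IH)
  also have "\<dots> = real ((2*m+1) * W m) * (2 * 2^m) * (real (Suc m) * fact m)"
    by (simp add: algebra_simps)
  also have "\<dots> = real (W (Suc m)) * 2 ^ Suc m * fact (Suc m)"
    by (simp only: W.simps power_Suc fact_Suc)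
  finally show ?case .
qed
lemma aux: fixes w p q f e u y :: real
  assumes "p > 0" "q > 0" "f > 0" "e > 0" "u > 0" "y > 0"
  shows "w / (u * ((p*q) / e)) = (w*p*f*e^2/((p*q)^2*(u* y))) / (f*e/(q* y))"
  using assms by (simp add: field_simps power2_eq_square)

lemma ratio_eq: assumes "m \<ge> 1"
  shows "real (W m) / (sqrt 2 * (2 * real m / exp 1) ^ m) = ss (2*m) / ss m"
proof -
  have p: "real m > 0" using assms by simp
  have s2: "sqrt (real (2*m)) = sqrt 2 * sqrt (real m)" by (simp add: real_sqrt_mult)
  have e2: "exp (real (2*m)) = exp (real m) ^ 2"
    by (simp add: power2_eq_square exp_add[symmetric])
  have pw: "real (2*m) ^ (2*m) = (2^m * real m ^ m) ^ 2"
    by (simp add: power_mult_distrib power_mult[symmetric] mult.commute)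
  have ee: "(2 * real m / exp 1) ^ m = (2^m * real m ^ m) / exp (real m)"
    by (simp add: power_divide power_mult_distrib exp_of_nat_mult[symmetric])
  have A: "ss (2*m) = real (W m) * 2^m * fact m * exp (real m) ^ 2 / ((2^m * real m ^ m) ^ 2 * (sqrt 2 * sqrt (real m)))"
    unfolding ss_def fact_2m s2 e2 pw ..
  have B: "ss m = fact m * exp (real m) / (real m ^ m * sqrt (real m))" unfolding ss_def ..
  have "real (W m) / (sqrt 2 * (2 * real m / exp 1) ^ m) = real (W m) / (sqrt 2 * ((2^m * real m ^ m) / exp (real m)))"
    by (simp only: ee)
  also have "\<dots> = (real (W m) * 2^m * fact m * exp (real m) ^ 2 / ((2^m * real m ^ m) ^ 2 * (sqrt 2 * sqrt (real m))))
       / (fact m * exp (real m) / (real m ^ m * sqrt (real m)))"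
    by (rule aux) (use p in auto)
  also have "\<dots> = ss (2*m) / ss m" by (simp only: A B)
  finally show ?thesis .
qed

lemma W_stirling: "(\<lambda>n. real (W (Suc n))) \<sim>[at_top] (\<lambda>n. sqrt 2 * (sqrt (real (2*n+2) / exp 1)) ^ (2*n+2))"
proof (rule asymp_equivI')
  have e: "sqrt 2 * (sqrt (real (2*n+2) / exp 1)) ^ (2*n+2) = sqrt 2 * (2 * real (Suc n) / exp 1) ^ (Suc n)" for n
  proof -
    have "(sqrt (real (2*n+2) / exp 1)) ^ (2*n+2) = ((sqrt (real (2*n+2) / exp 1))^2) ^ (Suc n)"
      by (simp only: power_mult[symmetric]) simp
    also have "\<dots> = (real (2*n+2) / exp 1) ^ Suc n" by simp
    also have "real (2*n+2) = 2 * real (Suc n)" by simp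
    finally show ?thesis by simp
  qed
  have "(\<lambda>n. ss (2 * Suc n) / ss (Suc n)) \<longlonglongrightarrow> 1" by (rule LIMSEQ_Suc[OF ss_ratio_lim])
  then show "(\<lambda>n. real (W (Suc n)) / (sqrt 2 * (sqrt (real (2*n+2) / exp 1)) ^ (2*n+2))) \<longlonglongrightarrow> 1"
    unfolding e using ratio_eq[of "Suc n" for n] by simp
qed

theorem corollary1:
  shows "(\<forall>c::real. (\<lambda>n. c ^ (2*n+1)) \<in> o(\<lambda>n. real (num_histories (lodgepole n))))
    \<and> (\<lambda>n. real (num_histories (lodgepole n))) \<sim>[at_top] (\<lambda>n. real (dfact (2*n+1)))
    \<and> (\<lambda>n. real (dfact (2*n+1))) \<sim>[at_top]
        (\<lambda>n. sqrt 2 * (sqrt (real (2*n+2) / exp 1)) ^ (2*n+2))"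
proof -
  have nh: "(\<lambda>n. real (num_histories (lodgepole n))) = (\<lambda>n. real (h n))"
    by (simp add: num_histories_G h_def)
  have df: "(\<lambda>n. real (dfact (2*n+1))) = (\<lambda>n. real (W (Suc n)))" by (rule ext) (simp only: dfact_W)
  have hW: "(\<lambda>n. real (h n)) \<sim>[at_top] (\<lambda>n. real (W (Suc n)))" using h_W_equiv by simp
  have Wh: "(\<lambda>n. real (W (Suc n))) \<in> O(\<lambda>n. real (h n))"
    by (rule asymp_equiv_imp_bigo) (rule asymp_equiv_symI[OF hW])
  have c1: "\<forall>c::real. (\<lambda>n. c ^ (2*n+1)) \<in> o(\<lambda>n. real (h n))"
    using landau_o.small_big_trans[OF c_small_W Wh] by blast
  show ?thesis unfolding nh df using c1 hW W_stirling by blast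
qed

end
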